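(* Let $b_1>b_2>0$, $m\in\mathbb R$ and $d\ge1$. Let $Y_1\sim b_1\chi^2_d$ and $Y_2\sim b_2\chi^2_d$ (not necessarily independent). Then $$\mathbb P(Y_1-Y_2\le m)\le \exp\!\Bigl(m\,\frac{b_1-b_2}{8b_1b_2}\Bigr)\rho^{d/4},\qquad \rho=1-\Bigl(\frac{b_1-b_2}{b_1+b_2}\Bigr)^2<1.$$
   Context: For $b>0$, "$Y\sim b\chi^2_d$" means $Y/b$ has the chi-squared distribution with $d$ degrees of freedom. *)

theory Defs
  imports "HOL-Probability.Probability"
begin

definition chi2_density :: "nat \<Rightarrow> real \<Rightarrow> real" where
  "chi2_density d x =
     (if 0 < x then x powr (real d / 2 - 1) * exp (- x / 2)
                    / (2 powr (real d / 2) * Gamma (real d / 2))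
      else 0)"

definition scaled_chi2 :: "'a measure \<Rightarrow> real \<Rightarrow> nat \<Rightarrow> ('a \<Rightarrow> real) \<Rightarrow> bool" where
  "scaled_chi2 M b d Y \<longleftrightarrow>
     distributed M lborel (\<lambda>\<omega>. Y \<omega> / b) (\<lambda>x. ennreal (chi2_density d x))"

end

theory Submission
  imports Defs
begin

lemma chi2_mgf:
  fixes s :: real and d :: nat
  assumes s: "s < 1/2" and d: "d \<ge> 1"
  shows "(\<integral>\<^sup>+x. ennreal (chi2_density d x) * ennreal (exp (s * x)) \<partial>lborel)
           = ennreal ((1 - 2 * s) powr (- (real d / 2)))"
proof -
  define a where "a = real d / 2"
  define k where "k = 1/2 - s"
  have a: "a > 0" using d by (simp add: a_def)
  have k: "k > 0" using s by (simp add: k_def)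
  define h where "h x = indicator {0..} x * x powr (a-1) / exp (k*x)" for x :: real
  define f where "f t = ennreal (indicator {0..} t * t powr (a - 1) / exp t)" for t :: real
  have fm: "f \<in> borel_measurable borel" unfolding f_def by measurable
  have G: "ennreal (Gamma a) = (\<integral>\<^sup>+t. f t \<partial>lborel)"
    using Gamma_conv_nn_integral_real[OF a] by (simp add: f_def)
  also have "\<dots> = ennreal k * (\<integral>\<^sup>+x. f (0 + k * x) \<partial>lborel)"
    using nn_integral_real_affine[OF fm, of k 0] k by simp
  also have "(\<integral>\<^sup>+x. f (0 + k * x) \<partial>lborel) = (\<integral>\<^sup>+x. ennreal (k powr (a-1)) * ennreal (h x) \<partial>lborel)"
  proof (rule nn_integral_cong)
    fix x :: real
    show "f (0 + k * x) = ennreal (k powr (a-1)) * ennreal (h x)"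
    proof (cases "x \<ge> 0")
      case True
      then show ?thesis using k unfolding f_def h_def
        by (simp add: powr_mult ennreal_mult[symmetric] zero_le_mult_iff)
    next
      case False
      then have "k * x < 0" using k by (simp add: mult_pos_neg)
      then show ?thesis using False unfolding f_def h_def by simp
    qed
  qed
  also have "\<dots> = ennreal (k powr (a-1)) * (\<integral>\<^sup>+x. ennreal (h x) \<partial>lborel)"
    unfolding h_def by (rule nn_integral_cmult) measurable
  finally have G2: "ennreal (Gamma a) = ennreal (k powr a) * (\<integral>\<^sup>+x. ennreal (h x) \<partial>lborel)"
    using k by (simp add: mult.assoc[symmetric] ennreal_mult[symmetric] powr_diff)
  have I: "(\<integral>\<^sup>+x. ennreal (h x) \<partial>lborel) = ennreal (Gamma a / k powr a)"
  proof -
    have "ennreal (Gamma a / k powr a) = ennreal (1 / k powr a) * ennreal (Gamma a)"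
      using k a by (simp add: ennreal_mult[symmetric])
    also have "\<dots> = ennreal (1 / k powr a * k powr a) * (\<integral>\<^sup>+x. ennreal (h x) \<partial>lborel)"
      using k by (simp add: G2 mult.assoc[symmetric] ennreal_mult[symmetric])
    also have "\<dots> = (\<integral>\<^sup>+x. ennreal (h x) \<partial>lborel)" using k by simp
    finally show ?thesis by simp
  qed
  have "(\<integral>\<^sup>+x. ennreal (chi2_density d x) * ennreal (exp (s * x)) \<partial>lborel)
      = (\<integral>\<^sup>+x. ennreal (1 / (2 powr a * Gamma a)) * ennreal (h x) \<partial>lborel)"
  proof (rule nn_integral_cong)
    fix x :: real
    have e: "exp (- x / 2) * exp (s * x) = 1 / exp (k * x)"
      by (simp add: k_def exp_add[symmetric] exp_minus[symmetric] field_simps)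
    show "ennreal (chi2_density d x) * ennreal (exp (s * x)) = ennreal (1 / (2 powr a * Gamma a)) * ennreal (h x)"
    proof (cases "x > 0")
      case True
      have "chi2_density d x * exp (s * x) = 1 / (2 powr a * Gamma a) * h x"
      proof -
        have e2: "exp (s * x) * exp (- (x / 2)) = inverse (exp (k * x))"
          by (simp add: k_def exp_add[symmetric] exp_minus[symmetric] algebra_simps)
        have "chi2_density d x * exp (s * x) = x powr (a - 1) * (exp (s * x) * exp (- (x / 2))) / (2 powr a * Gamma a)"
          unfolding chi2_density_def a_def[symmetric] using True by simp
        also have "\<dots> = 1 / (2 powr a * Gamma a) * h x"
          unfolding e2 h_def using True by (simp add: divide_inverse)
        finally show ?thesis .
      qed
      moreover have "chi2_density d x \<ge> 0" using True d by (simp add: chi2_density_def)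
      moreover have "h x \<ge> 0" using True by (simp add: h_def)
      moreover have "1 / (2 powr a * Gamma a) \<ge> 0" using a by simp
      ultimately show ?thesis
        by (metis ennreal_mult exp_ge_zero)
    next
      case False
      then show ?thesis unfolding chi2_density_def h_def
        by (cases "x = 0") auto
    qed
  qed
  also have "\<dots> = ennreal (1 / (2 powr a * Gamma a)) * (\<integral>\<^sup>+x. ennreal (h x) \<partial>lborel)"
    unfolding h_def by (rule nn_integral_cmult) measurable
  also have "\<dots> = ennreal (1 / (2 powr a * Gamma a) * (Gamma a / k powr a))"
    using a k by (simp add: I ennreal_mult[symmetric])
  also have "1 / (2 powr a * Gamma a) * (Gamma a / k powr a) = (1 - 2 * s) powr (- (real d / 2))"
  proof -
    have g: "Gamma a \<noteq> 0" using a by (metis Gamma_real_pos less_irrefl)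
    have sk: "1 - 2 * s = 2 * k" by (simp add: k_def)
    show ?thesis unfolding sk
      using a k g by (simp add: a_def[symmetric] powr_minus powr_mult[symmetric] field_simps del: mult_2_right)
  qed
  finally show ?thesis .
qed
lemma chi2_mgf_rv:
  assumes X: "distributed M lborel X (\<lambda>x. ennreal (chi2_density d x))"
    and s: "s < 1/2" and d: "d \<ge> 1"
  shows "(\<integral>\<^sup>+\<omega>. ennreal (exp (s * X \<omega>)) \<partial>M) = ennreal ((1 - 2 * s) powr (- (real d / 2)))"
proof -
  have "(\<integral>\<^sup>+\<omega>. ennreal (exp (s * X \<omega>)) \<partial>M)
      = (\<integral>\<^sup>+x. ennreal (chi2_density d x) * ennreal (exp (s * x)) \<partial>lborel)"
    by (rule distributed_nn_integral[OF X, symmetric]) measurable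
  also have "\<dots> = ennreal ((1 - 2 * s) powr (- (real d / 2)))"
    by (rule chi2_mgf[OF s d])
  finally show ?thesis .
qed

lemma amgm_aux:
  fixes u v L :: real
  assumes "L > 0"
  shows "u * v \<le> (L * u^2 + v^2 / L) / 2"
proof -
  have "0 \<le> (L * u - v)^2 / L" using assms by simp
  also have "(L * u - v)^2 / L = L * u^2 + v^2 / L - 2 * u * v"
    using assms by (simp add: power2_eq_square field_simps)
  finally show ?thesis by simp
qed


lemma rho_eq: "(b1::real) > b2 \<Longrightarrow> b2 > 0 \<Longrightarrow> 1 - ((b1 - b2) / (b1 + b2))^2 = 1 / ((b1 + b2) / (2 * b2) * ((b1 + b2) / (2 * b1)))"
proof -
  assume "(b1::real) > b2" "b2 > 0"
  then have q: "b1 + b2 \<noteq> 0" "b1 \<noteq> 0" "b2 \<noteq> 0" by auto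
  have "1 - ((b1 - b2) / (b1 + b2))^2 = ((b1 + b2)^2 - (b1 - b2)^2) / (b1 + b2)^2"
    using q by (simp add: power_divide diff_divide_distrib del: diff_divide_distrib) (simp add: divide_simps)
  also have "\<dots> = (4 * b1 * b2) / (b1 + b2)^2" by (simp add: power2_eq_square algebra_simps)
  also have "\<dots> = 1 / ((b1 + b2) / (2 * b2) * ((b1 + b2) / (2 * b1)))"
    using q by (simp add: power2_eq_square)
  finally show ?thesis .
qed

lemma sqrt_aux: "(A::real) > 0 \<Longrightarrow> B > 0 \<Longrightarrow> L = sqrt (B / A) \<Longrightarrow> L * A = sqrt (A * B) \<and> B / L = sqrt (A * B)"
proof -
  assume A0: "(A::real) > 0" and B0: "B > 0" and L: "L = sqrt (B / A)"
  have sA: "sqrt A * sqrt A = A" using A0 by simp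
  have sB: "sqrt B * sqrt B = B" using B0 by simp
  have sa: "sqrt A > 0" "sqrt B > 0" using A0 B0 by auto
  have "L * A = sqrt B / sqrt A * (sqrt A * sqrt A)" using sA L by (simp add: real_sqrt_divide)
  also have "\<dots> = sqrt A * sqrt B" using sa by (simp add: field_simps)
  finally have 1: "L * A = sqrt (A * B)" by (simp add: real_sqrt_mult)
  have "B / L = (sqrt B * sqrt B) / (sqrt B / sqrt A)" using sB L by (simp add: real_sqrt_divide)
  also have "\<dots> = sqrt A * sqrt B" using sa by (simp add: field_simps)
  finally have 2: "B / L = sqrt (A * B)" by (simp add: real_sqrt_mult)
  show ?thesis using 1 2 by simp
qed
lemma comb_aux: "L > 0 \<Longrightarrow> L * A = S \<Longrightarrow> B / L = S \<Longrightarrow> exp (t * m) * L / 2 * A + exp (t * m) / (2 * L) * B = exp (t * m) * (S::real)"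
proof -
  assume "L > 0" "L * A = S" "B / L = S"
  have "exp (t * m) * L / 2 * A + exp (t * m) / (2 * L) * B = exp (t * m) * ((L * A) + B / L) / 2"
    by (simp add: field_simps)
  then show ?thesis using \<open>L * A = S\<close> \<open>B / L = S\<close> by simp
qed

theorem lemma3p3:
  fixes M :: "'a measure" and b1 b2 m :: real and d :: nat
    and Y1 Y2 :: "'a \<Rightarrow> real"
  assumes "prob_space M"
    and "b1 > b2" and "b2 > 0" and "d \<ge> 1"
    and "scaled_chi2 M b1 d Y1" and "scaled_chi2 M b2 d Y2"
  shows "measure M {\<omega> \<in> space M. Y1 \<omega> - Y2 \<omega> \<le> m}
           \<le> exp (m * (b1 - b2) / (8 * b1 * b2))
             * (1 - ((b1 - b2) / (b1 + b2))^2) powr (real d / 4)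
         \<and> 1 - ((b1 - b2) / (b1 + b2))^2 < 1"
proof -
  interpret prob_space M by fact
  note b = assms(2,3)
  have b1: "b1 > 0" using b by simp
  define X1 where "X1 \<omega> = Y1 \<omega> / b1" for \<omega>
  define X2 where "X2 \<omega> = Y2 \<omega> / b2" for \<omega>
  have D1: "distributed M lborel X1 (\<lambda>x. ennreal (chi2_density d x))"
    using assms(5) unfolding scaled_chi2_def X1_def by simp
  have D2: "distributed M lborel X2 (\<lambda>x. ennreal (chi2_density d x))"
    using assms(6) unfolding scaled_chi2_def X2_def by simp
  have [measurable]: "X1 \<in> borel_measurable M"
    using distributed_measurable[OF D1] by simp
  have [measurable]: "X2 \<in> borel_measurable M"
    using distributed_measurable[OF D2] by simp
  have Y1e: "Y1 = (\<lambda>\<omega>. b1 * X1 \<omega>)" using b1 by (auto simp: X1_def)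
  have Y2e: "Y2 = (\<lambda>\<omega>. b2 * X2 \<omega>)" using b by (auto simp: X2_def)
  define S where "S = {\<omega> \<in> space M. Y1 \<omega> - Y2 \<omega> \<le> m}"
  have Ssets: "S \<in> sets M" unfolding S_def Y1e Y2e by measurable
  define t where "t = (b1 - b2) / (8 * b1 * b2)"
  have t: "t > 0" using b by (simp add: t_def)
  have e1: "1 + 4 * t * b1 = (b1 + b2) / (2 * b2)" unfolding t_def using b by (simp add: field_simps)
  have e2: "1 - 4 * t * b2 = (b1 + b2) / (2 * b1)" unfolding t_def using b by (simp add: field_simps)
  define A where "A = (1 + 4 * t * b1) powr (- (real d / 2))"
  define B where "B = (1 - 4 * t * b2) powr (- (real d / 2))"
  have A0: "A > 0" unfolding A_def e1 using b by simp
  have B0: "B > 0" unfolding B_def e2 using b by simp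
  have IA: "(\<integral>\<^sup>+\<omega>. ennreal (exp ((- 2 * t * b1) * X1 \<omega>)) \<partial>M) = ennreal A"
  proof -
    have "0 < t * b1" using t b1 by simp
    then have "- 2 * t * b1 < 1/2" by simp
    from chi2_mgf_rv[OF D1 this assms(4)] show ?thesis
      unfolding A_def by (simp add: algebra_simps)
  qed
  have "(b1 + b2) / (2 * b1) > 0" using b by simp
  then have s2: "2 * t * b2 < 1/2" using e2 by linarith
  have IB: "(\<integral>\<^sup>+\<omega>. ennreal (exp ((2 * t * b2) * X2 \<omega>)) \<partial>M) = ennreal B"
    unfolding B_def using chi2_mgf_rv[OF D2 s2 assms(4)]
    by (simp add: algebra_simps)
  define L where "L = sqrt (B / A)"
  have L0: "L > 0" using A0 B0 by (simp add: L_def)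
  define C1 where "C1 = exp (t * m) * L / 2"
  define C2 where "C2 = exp (t * m) / (2 * L)"
  have C10: "C1 \<ge> 0" using L0 by (simp add: C1_def)
  have C20: "C2 \<ge> 0" using L0 by (simp add: C2_def)
  have pw: "indicator S \<omega> \<le> ennreal (C1 * exp ((- 2 * t * b1) * X1 \<omega>))
                             + ennreal (C2 * exp ((2 * t * b2) * X2 \<omega>))" for \<omega>
  proof (cases "\<omega> \<in> S")
    case True
    define u where "u = exp (- t * b1 * X1 \<omega>)"
    define v where "v = exp (t * b2 * X2 \<omega>)"
    have "Y1 \<omega> - Y2 \<omega> \<le> m" using True by (simp add: S_def)
    then have "b1 * X1 \<omega> - b2 * X2 \<omega> \<le> m" by (simp add: Y1e Y2e)
    then have "0 \<le> t * (m - (b1 * X1 \<omega> - b2 * X2 \<omega>))"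
      using t by simp
    then have "0 \<le> t * m - t * b1 * X1 \<omega> + t * b2 * X2 \<omega>"
      by (simp add: algebra_simps)
    then have "1 \<le> exp (t * m - t * b1 * X1 \<omega> + t * b2 * X2 \<omega>)" by simp
    also have "\<dots> = exp (t * m) * (u * v)"
      unfolding u_def v_def by (simp add: mult_exp_exp algebra_simps)
    also have "\<dots> \<le> exp (t * m) * ((L * u^2 + v^2 / L) / 2)"
      using amgm_aux[OF L0, of u v] by (intro mult_left_mono) auto
    also have "\<dots> = C1 * exp ((- 2 * t * b1) * X1 \<omega>) + C2 * exp ((2 * t * b2) * X2 \<omega>)"
    proof -
      have u2: "u^2 = exp ((- 2 * t * b1) * X1 \<omega>)" unfolding u_def
        by (simp add: power2_eq_square mult_exp_exp algebra_simps)
      have v2: "v^2 = exp ((2 * t * b2) * X2 \<omega>)" unfolding v_def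
        by (simp add: power2_eq_square mult_exp_exp algebra_simps)
      show ?thesis unfolding u2 v2 C1_def C2_def using L0 by (simp add: field_simps)
    qed
    finally have "1 \<le> C1 * exp ((- 2 * t * b1) * X1 \<omega>) + C2 * exp ((2 * t * b2) * X2 \<omega>)" .
    then show ?thesis using True C10 C20
      by (simp add: ennreal_plus[symmetric] del: ennreal_plus)
  next
    case False
    then show ?thesis by simp
  qed
  have "emeasure M S = (\<integral>\<^sup>+\<omega>. indicator S \<omega> \<partial>M)"
    using Ssets by simp
  also have "\<dots> \<le> (\<integral>\<^sup>+\<omega>. ennreal (C1 * exp ((- 2 * t * b1) * X1 \<omega>))
                             + ennreal (C2 * exp ((2 * t * b2) * X2 \<omega>)) \<partial>M)"
    by (rule nn_integral_mono) (rule pw)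
  also have "\<dots> = (\<integral>\<^sup>+\<omega>. ennreal (C1 * exp ((- 2 * t * b1) * X1 \<omega>)) \<partial>M)
                  + (\<integral>\<^sup>+\<omega>. ennreal (C2 * exp ((2 * t * b2) * X2 \<omega>)) \<partial>M)"
    by (rule nn_integral_add) measurable
  also have "(\<integral>\<^sup>+\<omega>. ennreal (C1 * exp ((- 2 * t * b1) * X1 \<omega>)) \<partial>M)
      = ennreal C1 * (\<integral>\<^sup>+\<omega>. ennreal (exp ((- 2 * t * b1) * X1 \<omega>)) \<partial>M)"
    using C10 by (simp add: ennreal_mult nn_integral_cmult)
  also have "(\<integral>\<^sup>+\<omega>. ennreal (C2 * exp ((2 * t * b2) * X2 \<omega>)) \<partial>M)
      = ennreal C2 * (\<integral>\<^sup>+\<omega>. ennreal (exp ((2 * t * b2) * X2 \<omega>)) \<partial>M)"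
    using C20 by (simp add: ennreal_mult nn_integral_cmult)
  finally have E0: "emeasure M S \<le> ennreal C1 * (\<integral>\<^sup>+\<omega>. ennreal (exp ((- 2 * t * b1) * X1 \<omega>)) \<partial>M)
      + ennreal C2 * (\<integral>\<^sup>+\<omega>. ennreal (exp ((2 * t * b2) * X2 \<omega>)) \<partial>M)" .
  then have "emeasure M S \<le> ennreal C1 * ennreal A + ennreal C2 * ennreal B"
    by (simp only: IA IB)
  then have "emeasure M S \<le> ennreal (C1 * A + C2 * B)"
  proof -
    have "ennreal (C1 * A + C2 * B) = ennreal (C1 * A) + ennreal (C2 * B)"
      using C10 C20 A0 B0 by (intro ennreal_plus) auto
    also have "\<dots> = ennreal C1 * ennreal A + ennreal C2 * ennreal B"
      using C10 C20 A0 B0 by (simp add: ennreal_mult)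
    finally show ?thesis using \<open>emeasure M S \<le> ennreal C1 * ennreal A + ennreal C2 * ennreal B\<close> by simp
  qed
  then have M1: "measure M S \<le> C1 * A + C2 * B"
  proof -
    have "0 \<le> C1 * A + C2 * B" using C10 C20 A0 B0 by simp
    moreover have "ennreal (measure M S) \<le> ennreal (C1 * A + C2 * B)"
      using \<open>emeasure M S \<le> ennreal (C1 * A + C2 * B)\<close> by (simp only: emeasure_eq_measure)
    ultimately show ?thesis by (simp only: ennreal_le_iff)
  qed
  have "C1 * A + C2 * B = exp (t * m) * sqrt (A * B)"
    using sqrt_aux[OF A0 B0 L_def] comb_aux[OF L0] unfolding C1_def C2_def by blast
  also have "t * m = m * (b1 - b2) / (8 * b1 * b2)" by (simp add: t_def)
  also have "sqrt (A * B) = (1 - ((b1 - b2) / (b1 + b2))^2) powr (real d / 4)"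
  proof -
    have r: "1 - ((b1 - b2) / (b1 + b2))^2 = 1 / ((1 + 4 * t * b1) * (1 - 4 * t * b2))"
      unfolding e1 e2 using rho_eq[OF b] .
    have P0: "(1 + 4 * t * b1) * (1 - 4 * t * b2) > 0" unfolding e1 e2 using b by simp
    have "A * B = ((1 + 4 * t * b1) * (1 - 4 * t * b2)) powr (- (real d / 2))"
    proof -
      have p1: "0 \<le> 1 + 4 * t * b1" unfolding e1 using b by simp
      have p2: "0 \<le> 1 - 4 * t * b2" unfolding e2 using b by simp
      show ?thesis unfolding A_def B_def by (simp only: powr_mult)
    qed
    then have "sqrt (A * B) = (((1 + 4 * t * b1) * (1 - 4 * t * b2)) powr (- (real d / 2))) powr (1/2)"
      using P0 by (simp add: powr_half_sqrt)
    also have "\<dots> = ((1 + 4 * t * b1) * (1 - 4 * t * b2)) powr (- (real d / 4))"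
      by (simp add: powr_powr)
    also have "\<dots> = (1 - ((b1 - b2) / (b1 + b2))^2) powr (real d / 4)"
      unfolding r using P0 by (simp add: powr_minus powr_divide inverse_eq_divide)
    finally show ?thesis .
  qed
  finally have M2: "measure M S \<le> exp (m * (b1 - b2) / (8 * b1 * b2))
             * (1 - ((b1 - b2) / (b1 + b2))^2) powr (real d / 4)" using M1 by simp
  have "(b1 - b2) / (b1 + b2) \<noteq> 0" using b by simp
  then have "1 - ((b1 - b2) / (b1 + b2))^2 < 1" by simp
  with M2 show ?thesis unfolding S_def by simp
qed

end
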